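(* Let $C\subset\mathbb{R}^n$ be a compact convex set containing $0$. Let $g\in C$ with $g\ne0$ and let $H$ be a symmetric positive definite $n\times n$ matrix. Set $s=-Hg$, let $g_+$ be any maximizer of $z\mapsto z^Ts$ over $C$, and set $y=g_+-g$, $V=I-\frac{sy^T}{s^Ty}$, $H_+=VHV^T+\frac{ss^T}{s^Ty}$. Then $$\det H_+\le \frac{\det H}{1+\operatorname{sym}(C)}.$$
   Context: The symmetry measure of $C$ is $\operatorname{sym}(C)=\max\{t: g\in C\Rightarrow -tg\in C\}$. (Under the hypotheses, $s^Ty\ge g^THg>0$, so $H_+$ is well defined.) *)

theory Defs
  imports "HOL-Analysis.Analysis"
begin

text \<open>Under the standing hypotheses (C compact, containing a nonzero point) this set
  is nonempty, closed and bounded above, so the supremum is the maximum.\<close>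
definition sym_measure :: "(real ^ 'n) set \<Rightarrow> real" where
  "sym_measure C = Sup {t. \<forall>g\<in>C. - t *\<^sub>R g \<in> C}"

definition outer :: "real ^ 'n \<Rightarrow> real ^ 'n \<Rightarrow> real ^ 'n ^ 'n" where
  "outer u v = (\<chi> i j. u $ i * v $ j)"

definition pos_def_matrix :: "real ^ 'n ^ 'n \<Rightarrow> bool" where
  "pos_def_matrix H \<longleftrightarrow> transpose H = H \<and> (\<forall>x. x \<noteq> 0 \<longrightarrow> x \<bullet> (H *v x) > 0)"

end

theory Submission imports Defs begin

lemma mm_add_r: "((A::real^'n^'m) + B) ** C = A ** C + B ** C"
  by (simp add: vec_eq_iff matrix_matrix_mult_def sum.distrib distrib_right)
lemma mm_diff_r: "((A::real^'n^'m) - B) ** C = A ** C - B ** C"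
  by (simp add: vec_eq_iff matrix_matrix_mult_def sum_subtractf left_diff_distrib)
lemma mm_diff_l: "(A::real^'n^'m) ** (B - C) = A ** B - A ** C"
  by (simp add: vec_eq_iff matrix_matrix_mult_def sum_subtractf right_diff_distrib)
lemma mm_scale_r: "(c *\<^sub>R (A::real^'n^'m)) ** C = c *\<^sub>R (A ** C)"
  by (simp add: vec_eq_iff matrix_matrix_mult_def sum_distrib_left mult.assoc)
lemma mm_scale_l: "(A::real^'n^'m) ** (c *\<^sub>R C) = c *\<^sub>R (A ** C)"
  by (simp add: vec_eq_iff matrix_matrix_mult_def sum_distrib_left mult_ac)

lemma outer_mult_left: "outer u v ** A = outer u (transpose A *v v)"
  by (simp add: outer_def matrix_matrix_mult_def matrix_vector_mult_def transpose_def vec_eq_iff sum_distrib_left mult.commute mult.left_commute)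

lemma outer_mult_right: "A ** outer u v = outer (A *v u) v"
  by (simp add: outer_def matrix_matrix_mult_def matrix_vector_mult_def vec_eq_iff sum_distrib_left mult_ac)

lemma transpose_outer: "transpose (outer u v) = outer v u"
  by (simp add: outer_def transpose_def vec_eq_iff)

lemma outer_mulv: "outer u v *v x = (v \<bullet> x) *\<^sub>R u"
  by (simp add: outer_def matrix_vector_mult_def vec_eq_iff inner_vec_def sum_distrib_left mult.commute mult.left_commute)

lemma outer_zero: "outer 0 v = 0"
  by (simp add: outer_def vec_eq_iff)

lemma det_rank1: "det (mat 1 + outer u w :: real^'n^'n) = 1 + w \<bullet> u"
proof (cases "u = 0")
  case True then show ?thesis by (simp add: outer_zero)
next
  case False
  then obtain k where uk: "u$k \<noteq> 0" by (auto simp: vec_eq_iff)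
  define P :: "real^'n^'n" where "P = (\<chi> i j. if j = k then u$i else mat 1 $ i $ j)"
  have detP: "det P = u$k"
    using cramer_lemma[where A="mat 1 :: real^'n^'n" and k=k and x=u, unfolded matrix_vector_mul_lid] by (simp add: P_def)
  define v where "v = transpose P *v w"
  have Pk: "P *v axis k 1 = u"
  proof -
    have *: "\<And>j a b. (if j = k then a else b) * (if j = k then 1 else 0) = (if j = k then a else (0::real))"
      by simp
    show ?thesis by (simp add: vec_eq_iff matrix_vector_mult_def axis_def P_def * )
  qed
  have eq: "(mat 1 + outer u w) ** P = P ** (mat 1 + outer (axis k 1) v)"
    by (simp add: mm_add_r matrix_add_ldistrib outer_mult_left outer_mult_right Pk v_def)
  have tr: "transpose (mat 1 + outer (axis k 1) v) = (\<chi> i j. if j = k then (axis k 1 + v)$i else mat 1$i$j)"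
    by (simp add: vec_eq_iff transpose_def outer_def mat_def axis_def)
  have d2: "det (mat 1 + outer (axis k 1) v) = 1 + v$k"
    using cramer_lemma[where A="mat 1 :: real^'n^'n" and k=k and x="axis k 1 + v", unfolded matrix_vector_mul_lid] tr det_transpose[of "mat 1 + outer (axis k 1) v"]
    by simp
  have vk: "v$k = w \<bullet> u"
    by (simp add: v_def matrix_vector_mult_def transpose_def P_def inner_vec_def mult.commute)
  have "det (mat 1 + outer u w) * u$k = u$k * (1 + w \<bullet> u)"
    using arg_cong[OF eq, of det] by (simp add: det_mul detP d2 vk)
  then show ?thesis using uk by simp
qed

lemma det0_kernel: fixes A :: "real^'n^'n" assumes "det A = 0" shows "\<exists>x. x \<noteq> 0 \<and> A *v x = 0"
  using assms det_eq_0_rank less_rank_noninjective vec.inj_iff_eq_0 by blast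

lemma posdef_det_pos:
  fixes H :: "real^'n^'n"
  assumes "pos_def_matrix H"
  shows "det H > 0"
proof -
  define f where "f t = det ((1-t) *\<^sub>R mat 1 + t *\<^sub>R H)" for t :: real
  have cont: "continuous_on {0..1} f"
    unfolding f_def det_def
    by (intro continuous_intros)
  have nz: "f t \<noteq> 0" if t: "0 \<le> t" "t \<le> 1" for t
  proof
    assume "f t = 0"
    then obtain x where x: "x \<noteq> 0" "((1-t) *\<^sub>R mat 1 + t *\<^sub>R H) *v x = 0"
      using det0_kernel unfolding f_def by blast
    have "((1-t) *\<^sub>R mat 1 + t *\<^sub>R H) *v x = (1-t) *\<^sub>R x + t *\<^sub>R (H *v x)"
      by (simp add: matrix_vector_mult_add_rdistrib scaleR_matrix_vector_assoc[symmetric])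
    then have "0 = x \<bullet> ((1-t) *\<^sub>R x + t *\<^sub>R (H *v x))" using x by simp
    also have "\<dots> = (1-t) * (x \<bullet> x) + t * (x \<bullet> (H *v x))"
      by (simp add: inner_add_right)
    also have "\<dots> > 0"
    proof -
      have a: "x \<bullet> x > 0" using x by simp
      have b: "x \<bullet> (H *v x) > 0" using assms x unfolding pos_def_matrix_def by blast
      show ?thesis
      proof (cases "t = 0")
        case True then show ?thesis using a by simp
      next
        case False then have "t > 0" using t by simp
        then have "t * (x \<bullet> (H *v x)) > 0" using b by simp
        moreover have "(1-t) * (x \<bullet> x) \<ge> 0" using a t by simp
        ultimately show ?thesis by linarith
      qed
    qed
    finally show False by simp
  qed
  have f0: "f 0 = 1" by (simp add: f_def)
  have f1: "f 1 = det H" by (simp add: f_def)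
  show ?thesis
  proof (rule ccontr)
    assume "\<not> det H > 0"
    then have "f 1 \<le> 0" using f1 by simp
    then obtain t where "0 \<le> t" "t \<le> 1" "f t = 0"
      using IVT2'[of f 1 0 0, OF _ _ _ cont] f0 by auto
    then show False using nz by blast
  qed
qed
lemma sym_inner: fixes H :: "real^'n^'n" assumes "transpose H = H"
  shows "(H *v x) \<bullet> z = x \<bullet> (H *v z)"
proof -
  have "H *v x = x v* H" by (metis assms transpose_matrix_vector)
  then show ?thesis by (simp add: dot_lmul_matrix)
qed

theorem mainTheorem6:
  fixes C :: "(real ^ 'n) set" and g gp :: "real ^ 'n" and H :: "real ^ 'n ^ 'n"
  assumes "compact C" and "convex C" and "0 \<in> C"
    and "g \<in> C" and "g \<noteq> 0"
    and "pos_def_matrix H"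
    and "gp \<in> C" and "\<forall>z\<in>C. z \<bullet> (- (H *v g)) \<le> gp \<bullet> (- (H *v g))"
  shows "let s = - (H *v g); y = gp - g;
             V = mat 1 - (1 / (s \<bullet> y)) *\<^sub>R outer s y;
             Hp = V ** H ** transpose V + (1 / (s \<bullet> y)) *\<^sub>R outer s s
         in det Hp \<le> det H / (1 + sym_measure C)"
proof -
  define s where "s = - (H *v g)"
  define y where "y = gp - g"
  define d where "d = s \<bullet> y"
  define \<rho> where "\<rho> = 1 / d"
  define V where "V = mat 1 - \<rho> *\<^sub>R outer s y"
  define Hp where "Hp = V ** H ** transpose V + \<rho> *\<^sub>R outer s s"
  define q where "q = g \<bullet> (H *v g)"
  define S where "S = {t. \<forall>g\<in>C. - t *\<^sub>R g \<in> C}"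
  have Hsym: "transpose H = H" using assms(6) unfolding pos_def_matrix_def by blast
  have qpos: "q > 0" using assms(5,6) unfolding pos_def_matrix_def q_def by blast
  have detH: "det H > 0" using posdef_det_pos[OF assms(6)] .
  have sg: "s \<bullet> g = - q" by (simp add: s_def q_def inner_commute)
  have dS: "d \<ge> (1 + t) * q" if "t \<in> S" for t
  proof -
    have "- t *\<^sub>R g \<in> C" using that assms(4) unfolding S_def by blast
    then have "(- t *\<^sub>R g) \<bullet> s \<le> gp \<bullet> s" using assms(8) unfolding s_def by blast
    then have "t * q \<le> gp \<bullet> s" using sg by (simp add: inner_commute)
    then show ?thesis unfolding d_def y_def using sg
      by (simp add: inner_diff_right inner_commute algebra_simps)
  qed
  have S0: "0 \<in> S" using assms(3) unfolding S_def by simp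
  have dpos: "d > 0" using dS[OF S0] qpos by simp
  have Sbd: "t \<le> d / q - 1" if "t \<in> S" for t
    using dS[OF that] qpos by (simp add: field_simps)
  have bdd: "bdd_above S" unfolding bdd_above_def using Sbd by blast
  have sup0: "Sup S \<ge> 0" using cSup_upper[OF S0 bdd] .
  have supd: "Sup S \<le> d / q - 1" using cSup_least[of S] S0 Sbd by blast
  have symS: "sym_measure C = Sup S" unfolding sym_measure_def S_def ..
  define a where "a = sqrt (\<rho> / q)"
  define w where "w = a *\<^sub>R g - \<rho> *\<^sub>R y"
  define T where "T = mat 1 + outer s w"
  define h where "h = H *v y"
  define e where "e = h \<bullet> y"
  have rhod: "\<rho> * d = 1" using dpos by (simp add: \<rho>_def)
  have a2: "a * a * q = \<rho>" using qpos dpos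
    by (simp add: a_def \<rho>_def)
  have Hg: "H *v g = - s" by (simp add: s_def)
  have hg: "h \<bullet> g = - d"
    unfolding h_def using sym_inner[OF Hsym, of y g] Hg
    by (simp add: d_def inner_commute)
  have ys: "y \<bullet> s = d" by (simp add: d_def inner_commute)
  have Hw: "H *v w = - a *\<^sub>R s - \<rho> *\<^sub>R h"
    by (simp add: w_def h_def Hg matrix_vector_mult_diff_distrib matrix_vector_mult_scaleR)
  have wHw: "(H *v w) \<bullet> w = \<rho> + 2 * a + \<rho> * \<rho> * e"
  proof -
    have "(H *v w) \<bullet> w = a * a * q + a * \<rho> * d - a * \<rho> * (h \<bullet> g) + \<rho> * \<rho> * e"
      unfolding Hw unfolding w_def e_def
      apply (simp only: inner_diff_left inner_diff_right inner_minus_left inner_scaleR_left inner_scaleR_right)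
      apply (simp only: sg ys inner_commute[of s y] inner_commute[of h g])
      apply (simp add: algebra_simps)
      done
    then show ?thesis using a2 rhod hg by (simp add: algebra_simps)
  qed
  have trV: "transpose V = mat 1 - \<rho> *\<^sub>R outer y s"
    by (simp add: V_def transpose_def outer_def vec_eq_iff mat_def)
  have trT: "transpose T = mat 1 + outer w s"
    by (simp add: T_def transpose_def outer_def vec_eq_iff mat_def)
  have VH: "V ** H = H - \<rho> *\<^sub>R outer s h"
    by (simp add: V_def mm_diff_r mm_scale_r outer_mult_left Hsym h_def)
  have VHy: "(V ** H) *v y = h - (\<rho> * e) *\<^sub>R s"
    by (simp add: VH matrix_vector_mult_diff_rdistrib outer_mulv h_def e_def inner_commute
        scaleR_matrix_vector_assoc[symmetric])
  have L: "Hp = H - \<rho> *\<^sub>R outer s h - \<rho> *\<^sub>R outer (h - (\<rho> * e) *\<^sub>R s) s + \<rho> *\<^sub>R outer s s"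
    unfolding Hp_def trV mm_diff_l mm_scale_l outer_mult_right VHy
    by (simp add: VH)
  have TH: "T ** H = H + outer s (H *v w)"
    by (simp add: T_def mm_add_r outer_mult_left Hsym)
  have THw: "(T ** H) *v w = H *v w + ((H *v w) \<bullet> w) *\<^sub>R s"
    by (simp add: TH matrix_vector_mult_add_rdistrib outer_mulv)
  have R: "T ** H ** transpose T = H + outer s (H *v w) + outer (H *v w + ((H *v w) \<bullet> w) *\<^sub>R s) s"
    unfolding trT matrix_add_ldistrib outer_mult_right THw
    by (simp add: TH)
  have HpT: "Hp = T ** H ** transpose T"
    unfolding L R wHw unfolding Hw
    by (simp add: vec_eq_iff outer_def algebra_simps)
  have ws: "1 + w \<bullet> s = - a * q"
    using rhod sg by (simp add: w_def inner_diff_left ys inner_commute[of g s])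
  have detHp: "det Hp = det H * (q / d)"
  proof -
    have "det Hp = (1 + w \<bullet> s) * det H * (1 + w \<bullet> s)"
      unfolding HpT det_mul det_transpose T_def det_rank1 ..
    also have "\<dots> = det H * (a * a * q * q)" unfolding ws by (simp add: algebra_simps)
    also have "\<dots> = det H * (q / d)" unfolding a2 \<rho>_def by simp
    finally show ?thesis .
  qed
  have key: "det Hp \<le> det H / (1 + Sup S)"
  proof -
    have "q / d \<le> 1 / (1 + Sup S)"
      using supd sup0 qpos dpos by (simp add: field_simps)
    then have "det H * (q / d) \<le> det H * (1 / (1 + Sup S))"
      using detH by (intro mult_left_mono) auto
    then show ?thesis using detHp by simp
  qed
  show ?thesis
    unfolding Let_def using key
    by (simp add: symS Hp_def V_def \<rho>_def d_def s_def y_def)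
qed

end
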